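(* Consider the constrained perfect SIR model described in the context and assume $\gamma/\beta_{\max}+I_{\max}\le1$. The barrier $[\partial\mathcal{M}]_-$ of the MRPI set is constituted by the barrier curve $x^{\bar\beta}=(S,I)$ generated by the input rule $\bar\beta(t)=\beta_{\max}$ if $\lambda_2(t)-\lambda_1(t)>0$, $\bar\beta(t)=\beta_{\min}$ if $\lambda_2(t)-\lambda_1(t)<0$ (arbitrary if $=0$), together with the adjoint equation $\dot\lambda=\begin{pmatrix}\bar\beta I & -\bar\beta I\\ \bar\beta S & -\bar\beta S+\gamma\end{pmatrix}\lambda$, $\lambda(\bar t)=(0,1)^T$, which ends tangentially to $G_0\cap\Pi$ at the point $(\gamma/\beta_{\max},I_{\max})\in G_0\cap\Pi$ at time $\bar t$; moreover there exists $\epsilon>0$ such that $x^{\bar\beta}(t)\in G_-$ for all $t\in]\bar t-\epsilon,\bar t[$.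
   Context: Perfect SIR model: fix $\gamma>0$, $0<\beta_{\min}\le\beta_{\max}$, $I_{\max}\in(0,1]$. State $x=(S,I)\in\mathbb{R}^2$, input a Lebesgue measurable $\beta:[t_0,\infty[\to[\beta_{\min},\beta_{\max}]$, dynamics $\dot S=-\beta SI$, $\dot I=\beta SI-\gamma I$, written $\dot x=f(x,\beta)$. Constraint $g(S,I)=I-I_{\max}$; $G=\{I\le I_{\max}\}$, $G_-=\{I<I_{\max}\}$, $G_0=\{I=I_{\max}\}$, $\Pi=\{(S,I)\in[0,1]^2:S+I\le1\}$. The maximal robust positively invariant (MRPI) set is $\mathcal{M}=\{x_0\in G:$ the solution from $x_0$ at $t_0$ lies in $G$ for all $t\ge t_0$ and all such inputs $\beta\}$ (closed); its barrier is $[\partial\mathcal{M}]_-=\partial\mathcal{M}\cap G_-$. A barrier curve of $\mathcal{M}$ is an integral curve reaching $G_0$ tangentially at time $\bar t$ at $z$, with a nonzero absolutely continuous $\lambda$ solving $\dot\lambda=-(\partial f/\partial x)^T\lambda$, $\lambda(\bar t)=(0,1)^T$, such that $\max_\beta\lambda^Tf(x(t),\beta)=\lambda^Tf(x(t),\bar\beta(t))=0$ a.e. and $\max_\beta L_fg(z,\beta)=L_fg(z,\bar\beta(\bar t))=0$, with $L_fg=Dg\,f$. *)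

theory Defs
  imports "HOL-Analysis.Analysis"
begin

text \<open>Perfect SIR model. States are pairs (S, I) :: real \<times> real.\<close>

definition sir_f :: "real \<Rightarrow> real \<times> real \<Rightarrow> real \<Rightarrow> real \<times> real" where
  "sir_f \<gamma> x b = (- b * fst x * snd x, b * fst x * snd x - \<gamma> * snd x)"

text \<open>Adjoint right-hand side: lambda' = -(df/dx)^T lambda
  = [[b I, -b I], [b S, -b S + gamma]] lambda.\<close>
definition sir_adj :: "real \<Rightarrow> real \<times> real \<Rightarrow> real \<times> real \<Rightarrow> real \<Rightarrow> real \<times> real" where
  "sir_adj \<gamma> x l b =
     (b * snd x * fst l - b * snd x * snd l,
      b * fst x * fst l + (- b * fst x + \<gamma>) * snd l)"

text \<open>Constraint g(S,I) = I - Imax and its Lie derivative L_f g = Dg f.\<close>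
definition sir_g :: "real \<Rightarrow> real \<times> real \<Rightarrow> real" where
  "sir_g Imax x = snd x - Imax"

definition Lfg :: "real \<Rightarrow> real \<times> real \<Rightarrow> real \<Rightarrow> real" where
  "Lfg \<gamma> x b = snd (sir_f \<gamma> x b)"

definition G_set :: "real \<Rightarrow> (real \<times> real) set" where
  "G_set Imax = {x. sir_g Imax x \<le> 0}"

definition G_minus :: "real \<Rightarrow> (real \<times> real) set" where
  "G_minus Imax = {x. sir_g Imax x < 0}"

definition G_zero :: "real \<Rightarrow> (real \<times> real) set" where
  "G_zero Imax = {x. sir_g Imax x = 0}"

definition Pi_set :: "(real \<times> real) set" where
  "Pi_set = {x. 0 \<le> fst x \<and> fst x \<le> 1 \<and> 0 \<le> snd x \<and> snd x \<le> 1 \<and> fst x + snd x \<le> 1}"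

definition admissible_input :: "real \<Rightarrow> real \<Rightarrow> real \<Rightarrow> (real \<Rightarrow> real) \<Rightarrow> bool" where
  "admissible_input bmin bmax t0 \<beta> \<longleftrightarrow>
     \<beta> \<in> borel_measurable lebesgue \<and> (\<forall>t\<ge>t0. \<beta> t \<in> {bmin..bmax})"

text \<open>Caratheodory solution on [t0, T] in integral form
  (equivalently: absolutely continuous, with x' = f(x, beta) a.e.).\<close>
definition sir_solution :: "real \<Rightarrow> (real \<Rightarrow> real) \<Rightarrow> real \<Rightarrow> real \<Rightarrow> (real \<Rightarrow> real \<times> real) \<Rightarrow> bool" where
  "sir_solution \<gamma> \<beta> t0 T x \<longleftrightarrow>
     (\<forall>t\<in>{t0..T}. ((\<lambda>s. sir_f \<gamma> (x s) (\<beta> s)) has_integral (x t - x t0)) {t0..t})"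

definition MRPI :: "real \<Rightarrow> real \<Rightarrow> real \<Rightarrow> real \<Rightarrow> real \<Rightarrow> (real \<times> real) set" where
  "MRPI \<gamma> bmin bmax Imax t0 =
     {x0 \<in> G_set Imax. \<forall>\<beta> T x. admissible_input bmin bmax t0 \<beta> \<and> x t0 = x0 \<and>
        sir_solution \<gamma> \<beta> t0 T x \<longrightarrow> (\<forall>t\<in>{t0..T}. x t \<in> G_set Imax)}"

definition barrier :: "real \<Rightarrow> real \<Rightarrow> real \<Rightarrow> real \<Rightarrow> real \<Rightarrow> (real \<times> real) set" where
  "barrier \<gamma> bmin bmax Imax t0 = frontier (MRPI \<gamma> bmin bmax Imax t0) \<inter> G_minus Imax"

definition barrier_curve ::
  "real \<Rightarrow> real \<Rightarrow> real \<Rightarrow> real \<Rightarrow> real \<Rightarrow> (real \<Rightarrow> real \<times> real) \<Rightarrow> (real \<Rightarrow> real \<times> real)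
     \<Rightarrow> (real \<Rightarrow> real) \<Rightarrow> real \<times> real \<Rightarrow> bool" where
  "barrier_curve \<gamma> bmin bmax Imax tb x l b z \<longleftrightarrow>
     b \<in> borel_measurable lebesgue \<and> (\<forall>t\<le>tb. b t \<in> {bmin..bmax}) \<and>
     (\<forall>s t. s \<le> t \<and> t \<le> tb \<longrightarrow>
        ((\<lambda>\<tau>. sir_f \<gamma> (x \<tau>) (b \<tau>)) has_integral (x t - x s)) {s..t}) \<and>
     (\<forall>s t. s \<le> t \<and> t \<le> tb \<longrightarrow>
        ((\<lambda>\<tau>. sir_adj \<gamma> (x \<tau>) (l \<tau>) (b \<tau>)) has_integral (l t - l s)) {s..t}) \<and>
     x tb = z \<and> z \<in> G_zero Imax \<and>
     l tb = (0, 1) \<and>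
     (AE t in lebesgue. t \<le> tb \<longrightarrow>
        (\<forall>\<beta>\<in>{bmin..bmax}. l t \<bullet> sir_f \<gamma> (x t) \<beta> \<le> 0) \<and>
        l t \<bullet> sir_f \<gamma> (x t) (b t) = 0) \<and>
     (\<forall>\<beta>\<in>{bmin..bmax}. Lfg \<gamma> z \<beta> \<le> 0) \<and> Lfg \<gamma> z (b tb) = 0"

end

theory Submission
  imports Defs
begin


lemma incr_bound:
  fixes g :: "real \<Rightarrow> real"
  assumes ab: "a \<le> b" and K: "K \<ge> 0"
  and H: "\<And>s t. a \<le> s \<Longrightarrow> s \<le> t \<Longrightarrow> t \<le> b \<Longrightarrow> g t - g s \<le> C*(t-s) + K*(t-s)^2"
  shows "g b - g a \<le> C*(b-a)"
proof -
  have n: "g b - g a \<le> C*(b-a) + K*(b-a)^2/n" if n: "n > 0" for n :: nat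
  proof -
    define p where "p k = a + real k * (b-a)/n" for k :: nat
    have p0: "p 0 = a" and pn: "p n = b" using n by (auto simp: p_def)
    have tel: "(\<Sum>k<n. g (p (Suc k)) - g (p k)) = g (p n) - g (p 0)"
      by (rule sum_lessThan_telescope)
    have step: "g (p (Suc k)) - g (p k) \<le> C*((b-a)/n) + K*((b-a)/n)^2" if k: "k < n" for k
    proof -
      have d: "p (Suc k) - p k = (b-a)/n" using n by (simp add: p_def field_simps)
      have "0 \<le> (b-a)/n" using ab by simp
      have "real k * (b-a)/n \<ge> 0" using ab by simp
      hence a1: "a \<le> p k" by (simp add: p_def)
      have "real (Suc k) * (b-a) \<le> real n * (b-a)" using k ab by (intro mult_right_mono) auto
      hence "real (Suc k) * (b-a)/n \<le> b - a" using n by (simp add: divide_le_eq mult.commute)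
      hence a2: "p (Suc k) \<le> b" by (simp add: p_def)
      have "p k \<le> p (Suc k)" using d \<open>0 \<le> (b-a)/n\<close> by linarith
      from H[OF a1 this a2] d show ?thesis by simp
    qed
    have "g b - g a = (\<Sum>k<n. g (p (Suc k)) - g (p k))" using tel p0 pn by simp
    also have "\<dots> \<le> (\<Sum>k<n. C*((b-a)/n) + K*((b-a)/n)^2)"
      by (rule sum_mono) (use step in auto)
    also have "\<dots> = C*(b-a) + K*(b-a)^2/n" using n by (simp add: field_simps power2_eq_square)
    finally show ?thesis .
  qed
  show ?thesis
  proof (rule ccontr)
    assume "\<not> ?thesis"
    then have d: "g b - g a - C*(b-a) > 0" by simp
    obtain n :: nat where "K*(b-a)^2 / (g b - g a - C*(b-a)) < n" using reals_Archimedean2 by blast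
    then have "K*(b-a)^2 / (g b - g a - C*(b-a)) < Suc n" by simp
    then have "K*(b-a)^2 < Suc n * (g b - g a - C*(b-a))" using d by (simp add: divide_less_eq mult.commute)
    then have "K*(b-a)^2 / Suc n < g b - g a - C*(b-a)" by (simp add: divide_less_eq mult.commute)
    with n[of "Suc n"] show False by simp
  qed
qed



definition psi0 :: "real \<Rightarrow> real \<Rightarrow> real" where "psi0 c S = S - c*ln S - c + c*ln c"
definition psi :: "real \<Rightarrow> real \<Rightarrow> real" where "psi c S = psi0 c (max S c)"
definition dpsi :: "real \<Rightarrow> real \<Rightarrow> real" where "dpsi c S = 1 - c / max S c"
definition PP :: "real \<Rightarrow> real \<times> real \<Rightarrow> real" where "PP c x = snd x + psi c (fst x)"

lemma psi0_taylor:
  assumes c: "c > 0" and y: "y \<ge> c" and w: "w \<ge> c"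
  shows "psi0 c y - psi0 c w - (1 - c/w)*(y-w) \<le> (y-w)^2/c"
proof -
  have yp: "y > 0" and wp: "w > 0" using c y w by auto
  have l: "ln w - ln y \<le> (w-y)/y" using ln_diff_le[OF wp yp] .
  have e: "psi0 c y - psi0 c w - (1 - c/w)*(y-w) = c*(y-w)/w - c*(ln y - ln w)"
    using wp by (simp add: psi0_def field_simps)
  have "(w-y)/y = -((y-w)/y)" by (metis minus_diff_eq minus_divide_left)
  hence l2: "(y-w)/y \<le> ln y - ln w" using l by linarith
  have "c*(ln y - ln w) \<ge> c*((y-w)/y)" using mult_left_mono[OF l2] c by simp
  hence "psi0 c y - psi0 c w - (1 - c/w)*(y-w) \<le> c*(y-w)/w - c*((y-w)/y)" using e by linarith
  also have "\<dots> = c*(y-w)^2/(w*y)" using wp yp by (simp add: field_simps power2_eq_square)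
  also have "\<dots> \<le> (y-w)^2/c"
  proof -
    have "c*c \<le> w*y" using c y w by (intro mult_mono) auto
    hence "c*(y-w)^2*c \<le> (y-w)^2*(w*y)"
      by (metis mult.commute mult.left_commute mult_left_mono zero_le_power2)
    thus ?thesis using c wp yp by (simp add: divide_le_eq le_divide_eq mult.commute mult.left_commute)
  qed
  finally show ?thesis .
qed

lemma psi0_c: "psi0 c c = 0" by (simp add: psi0_def)

lemma psi0_nonneg: assumes c: "c > 0" and S: "S \<ge> c" shows "psi0 c S \<ge> 0"
proof -
  have "ln S - ln c \<le> (S - c)/c" using ln_diff_le[of S c] c S by simp
  hence "c*(ln S - ln c) \<le> S - c" using c by (simp add: field_simps)
  thus ?thesis by (simp add: psi0_def algebra_simps)
qed

lemma psi_nonneg: assumes "c > 0" shows "psi c S \<ge> 0"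
  using psi0_nonneg[OF assms, of "max S c"] by (simp add: psi_def)

lemma psi_taylor:
  assumes c: "c > 0"
  shows "psi c y - psi c w \<le> dpsi c w * (y - w) + (y-w)^2/c"
proof (cases "y \<le> c")
  case yc: True
  show ?thesis
  proof (cases "w \<le> c")
    case True
    then show ?thesis using yc c by (simp add: psi_def dpsi_def max_def psi0_c)
  next
    case False
    hence wc: "w > c" by simp
    have t: "psi0 c c - psi0 c w - (1 - c/w)*(c-w) \<le> (c-w)^2/c"
      using psi0_taylor[OF c, of c w] wc by simp
    have e1: "psi c y = 0" using yc by (simp add: psi_def max_def psi0_c)
    have e2: "psi c w = psi0 c w" "dpsi c w = 1 - c/w" using wc by (auto simp: psi_def dpsi_def max_def)
    have d: "1 - c/w \<le> (w-c)/c" 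
    proof -
      have "1 - c/w = (w-c)/w" using wc c by (simp add: field_simps)
      also have "\<dots> \<le> (w-c)/c" using wc c by (intro divide_left_mono) auto
      finally show ?thesis .
    qed
    define A where "A = 1 - c/w"
    have t': "- psi0 c w - A*(c-w) \<le> (w-c)^2/c" using t psi0_c[of c] by (simp add: A_def power2_commute)
    have m1: "A*(c - y) \<le> (w-c)/c*(c-y)" unfolding A_def using d yc by (intro mult_right_mono) auto
    have m2: "(w-c)/c*(c-y) + (w-c)^2/c = (w-c)*(w-y)/c" using c by (simp add: field_simps power2_eq_square)
    have "(w-c)*(w-y) \<le> (w-y)^2" using wc yc by (simp add: power2_eq_square mult_right_mono)
    hence m3: "(w-c)*(w-y)/c \<le> (y-w)^2/c" using c by (simp add: divide_right_mono power2_commute)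
    have m4: "A*(c-y) = A*(c-w) + A*(w-y)" by (simp add: algebra_simps)
    have h: "- psi0 c w + A*(w-y) \<le> (y-w)^2/c" using t' m1 m2 m3 m4 by linarith
    have h2: "A*(y-w) = -(A*(w-y))" by (simp add: algebra_simps)
    show ?thesis unfolding e1 e2(1) e2(2)[folded A_def] using h h2 by linarith
  qed
next
  case False
  hence yc: "y > c" by simp
  show ?thesis
  proof (cases "w \<le> c")
    case True
    have t: "psi0 c y - psi0 c c - (1 - c/c)*(y-c) \<le> (y-c)^2/c"
      using psi0_taylor[OF c, of y c] yc by simp
    have "(y-c)^2 \<le> (y-w)^2" using True yc by (intro power_mono) auto
    hence "(y-c)^2/c \<le> (y-w)^2/c" using c by (simp add: divide_right_mono)
    then show ?thesis using t True yc c by (simp add: psi_def dpsi_def max_def psi0_c)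
  next
    case False
    then show ?thesis using psi0_taylor[OF c, of y w] yc c by (simp add: psi_def dpsi_def max_def)
  qed
qed

lemma dpsi_lip:
  assumes c: "c > 0"
  shows "\<bar>dpsi c y - dpsi c w\<bar> \<le> \<bar>y - w\<bar>/c"
proof -
  define a where "a = max y c"
  define b where "b = max w c"
  have ab: "a \<ge> c" "b \<ge> c" by (auto simp: a_def b_def)
  have "\<bar>a - b\<bar> \<le> \<bar>y - w\<bar>" by (auto simp: a_def b_def max_def)
  have "dpsi c y - dpsi c w = c*(a-b)/(a*b)" using ab c by (simp add: dpsi_def a_def[symmetric] b_def[symmetric] field_simps)
  hence "\<bar>dpsi c y - dpsi c w\<bar> = c*\<bar>a-b\<bar>/(a*b)" using ab c by (simp add: abs_mult abs_divide)
  also have "\<dots> \<le> \<bar>a-b\<bar>/c"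
  proof -
    have "c*c \<le> a*b" using ab c by (intro mult_mono) auto
    hence "c*\<bar>a-b\<bar>*c \<le> \<bar>a-b\<bar>*(a*b)" by (metis abs_ge_zero mult.assoc mult.commute mult_left_mono)
    thus ?thesis using ab c by (simp add: divide_le_eq le_divide_eq mult.commute mult.left_commute)
  qed
  also have "\<dots> \<le> \<bar>y - w\<bar>/c" using \<open>\<bar>a - b\<bar> \<le> \<bar>y - w\<bar>\<close> c by (simp add: divide_right_mono)
  finally show ?thesis .
qed

lemma sign_P:
  assumes g: "\<gamma> > 0" and bm: "bmax > 0" and c: "c = \<gamma>/bmax"
    and b: "0 < \<beta>" "\<beta> \<le> bmax" and I: "I \<ge> 0"
  shows "dpsi c S * (- \<beta> * S * I) + (\<beta> * S * I - \<gamma> * I) \<le> 0"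
proof (cases "S \<le> c")
  case True
  have cp: "c > 0" using g bm c by simp
  have "\<beta> * S \<le> \<beta> * c" using True b by simp
  also have "\<beta> * c \<le> bmax * c" using b cp by simp
  also have "bmax * c = \<gamma>" using c bm by simp
  finally have "\<beta>*S - \<gamma> \<le> 0" by simp
  hence "(\<beta>*S - \<gamma>)*I \<le> 0" using I by (simp add: mult_nonpos_nonneg)
  then show ?thesis using True cp by (simp add: dpsi_def max_def algebra_simps)
next
  case False
  have cp: "c > 0" using g bm c by simp
  have Sp: "S > 0" using False cp by simp
  have e: "dpsi c S * (- \<beta> * S * I) + (\<beta> * S * I - \<gamma> * I) = (c*\<beta> - \<gamma>)*I"
    using False Sp by (simp add: dpsi_def max_def field_simps)
  have "c*\<beta> \<le> c*bmax" using b cp by simp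
  also have "c*bmax = \<gamma>" using c bm by simp
  finally have "(c*\<beta> - \<gamma>)*I \<le> 0" using I by (simp add: mult_nonpos_nonneg)
  then show ?thesis using e by simp
qed



lemma path_lip:
  fixes x F :: "real \<Rightarrow> real \<times> real"
  assumes st: "s \<le> t" and int: "(F has_integral (x t - x s)) {s..t}"
   and Fb: "\<And>\<tau>. \<tau> \<in> {s..t} \<Longrightarrow> norm (F \<tau>) \<le> M"
  shows "norm (x t - x s) \<le> M * (t - s)"
proof -
  have M0: "M \<ge> 0" using Fb[of s] st by (meson atLeastAtMost_iff norm_ge_zero order.trans order_refl)
  have "norm (x t - x s) \<le> M * measure lborel {s..t}"
    by (rule has_integral_bound_real[OF M0 finite.emptyI int]) (use Fb in auto)
  thus ?thesis using st by simp
qed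

lemma path_step:
  fixes x F :: "real \<Rightarrow> real \<times> real" and \<Phi> :: "real \<times> real \<Rightarrow> real"
  assumes st: "s \<le> t" and int: "(F has_integral (x t - x s)) {s..t}"
   and Fb: "\<And>\<tau>. \<tau> \<in> {s..t} \<Longrightarrow> norm (F \<tau>) \<le> M"
   and tay: "\<Phi> (x t) - \<Phi> (x s) \<le> D \<bullet> (x t - x s) + K * (norm (x t - x s))^2"
   and lin: "\<And>\<tau>. \<tau> \<in> {s..t} \<Longrightarrow> D \<bullet> F \<tau> \<le> C + L * (t - s)"
   and K: "K \<ge> 0"
  shows "\<Phi> (x t) - \<Phi> (x s) \<le> C*(t-s) + (L + K*M^2)*(t-s)^2"
proof -
  have i1: "((\<lambda>\<tau>. D \<bullet> F \<tau>) has_integral D \<bullet> (x t - x s)) {s..t}"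
    using has_integral_linear[OF int bounded_linear_inner_right[of D]] by (simp add: o_def)
  have i2: "((\<lambda>\<tau>. C + L*(t-s)) has_integral (C + L*(t-s))*(t-s)) {s..t}"
    using has_integral_const_real[of "C + L*(t-s)" s t] st by (simp add: mult.commute)
  have a: "D \<bullet> (x t - x s) \<le> (C + L*(t-s))*(t-s)" by (rule has_integral_le[OF i1 i2]) (use lin in auto)
  have M0: "M \<ge> 0" using Fb[of s] st by (meson atLeastAtMost_iff norm_ge_zero order.trans order_refl)
  have n: "norm (x t - x s) \<le> M * (t - s)" by (rule path_lip[OF st int Fb])
  hence "(norm (x t - x s))^2 \<le> (M*(t-s))^2" by (intro power_mono) auto
  hence "K * (norm (x t - x s))^2 \<le> K * (M*(t-s))^2" using K by (rule mult_left_mono)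
  with a tay show ?thesis by (simp add: algebra_simps power2_eq_square)
qed



lemma abs3: fixes \<beta> S I :: real
  assumes "\<bar>\<beta>\<bar> \<le> bm" "\<bar>S\<bar> \<le> B" "\<bar>I\<bar> \<le> B"
  shows "\<bar>\<beta>*S*I\<bar> \<le> bm*B^2"
proof -
  have "\<bar>\<beta>*S*I\<bar> = \<bar>\<beta>\<bar>*\<bar>S\<bar>*\<bar>I\<bar>" by (simp add: abs_mult)
  also have "\<dots> \<le> bm*B*B" using assms by (intro mult_mono) auto
  finally show ?thesis by (simp add: power2_eq_square mult.assoc)
qed

lemma fst_le_norm: "\<bar>fst v\<bar> \<le> norm (v::real\<times>real)"
  using norm_fst_le[of "fst v" "snd v"] by simp
lemma snd_le_norm: "\<bar>snd v\<bar> \<le> norm (v::real\<times>real)"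
  using norm_snd_le[of "snd v" "fst v"] by simp

lemma inner_pair_real: "(a, b) \<bullet> (v::real\<times>real) = a * fst v + b * snd v"
  by (cases v) simp

lemma log_taylor:
  fixes y w m :: real
  assumes "y \<ge> m" "w \<ge> m" "m > 0"
  shows "- ln y - (- ln w) \<le> - (y - w)/w + (1/m^2) * (y - w)^2"
proof -
  have yp: "y > 0" and wp: "w > 0" using assms by auto
  have "ln w - ln y \<le> (w - y)/y" using ln_diff_le[OF wp yp] .
  also have "(w-y)/y = - (y - w)/w + (y-w)^2/(w*y)" using yp wp by (simp add: field_simps power2_eq_square)
  also have "(y-w)^2/(w*y) \<le> (1/m^2) * (y - w)^2"
  proof -
    have "m*m \<le> w*y" using assms by (intro mult_mono) auto
    hence "m^2 \<le> w*y" by (simp add: power2_eq_square)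
    hence "(y-w)^2/(w*y) \<le> (y-w)^2/m^2" using assms by (intro divide_left_mono) auto
    thus ?thesis by simp
  qed
  finally show ?thesis by simp
qed

lemma lin_log:
  fixes I w m A M d g :: real
  assumes "I > 0" "w \<ge> m" "m > 0" "g \<le> A" "A \<ge> 0" "I - w \<le> M * d" "M \<ge> 0" "d \<ge> 0"
  shows "I * g / w \<le> A + A*M/m * d"
proof (cases "g \<le> 0")
  case True
  have "I * g / w \<le> 0" using True assms by (simp add: divide_nonpos_pos mult_nonneg_nonpos)
  also have "0 \<le> A + A*M/m*d" using assms by simp
  finally show ?thesis .
next
  case False
  have wp: "w > 0" using assms by simp
  have "I * g / w \<le> I * A / w" using assms False by (intro divide_right_mono mult_left_mono) auto
  also have "I * A / w = A * (I / w)" by simp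
  also have "I / w \<le> 1 + M*d/m"
  proof -
    have "I \<le> w + M*d" using assms by simp
    hence "I / w \<le> (w + M*d)/w" using wp by (simp add: divide_right_mono)
    also have "\<dots> = 1 + M*d/w" using wp by (simp add: field_simps)
    also have "M*d/w \<le> M*d/m" using assms by (intro divide_left_mono) auto
    finally show ?thesis by simp
  qed
  hence "A * (I / w) \<le> A * (1 + M*d/m)" using assms by (intro mult_left_mono) auto
  also have "\<dots> = A + A*M/m*d" by (simp add: field_simps)
  finally show ?thesis .
qed



lemma invariance:
  assumes g: "\<gamma> > 0" and bmin: "0 < bmin" "bmin \<le> bmax" and c: "c = \<gamma>/bmax"
   and adm: "admissible_input bmin bmax t0 \<beta>"
   and sol: "sir_solution \<gamma> \<beta> t0 T x"
   and I0: "snd (x t0) > 0" and P0: "PP c (x t0) \<le> Imax"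
   and t: "t \<in> {t0..T}"
  shows "snd (x t) \<le> Imax"
proof -
  have tT: "t0 \<le> T" using t by simp
  have bm: "bmax > 0" using bmin by simp
  have cp: "c > 0" using c g bm by simp
  have bet: "\<And>\<tau>. \<tau> \<ge> t0 \<Longrightarrow> bmin \<le> \<beta> \<tau> \<and> \<beta> \<tau> \<le> bmax" using adm by (auto simp: admissible_input_def)
  define F where "F = (\<lambda>\<tau>. sir_f \<gamma> (x \<tau>) (\<beta> \<tau>))"
  have intT: "(F has_integral (x T - x t0)) {t0..T}" using sol tT by (simp add: sir_solution_def F_def)
  hence Fint: "F integrable_on {t0..T}" by blast
  have xeq: "x \<tau> = x t0 + integral {t0..\<tau>} F" if "\<tau> \<in> {t0..T}" for \<tau>
  proof -
    have "(F has_integral (x \<tau> - x t0)) {t0..\<tau>}" using sol that by (simp add: sir_solution_def F_def)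
    hence "integral {t0..\<tau>} F = x \<tau> - x t0" by (rule integral_unique)
    thus ?thesis by simp
  qed
  have xcont: "continuous_on {t0..T} x"
  proof -
    have "continuous_on {t0..T} (\<lambda>\<tau>. x t0 + integral {t0..\<tau>} F)"
      using indefinite_integral_continuous_1[OF Fint] by (intro continuous_intros)
    thus ?thesis by (rule continuous_on_eq) (metis xeq)
  qed
  have incr: "(F has_integral (x b - x a)) {a..b}" if ab: "t0 \<le> a" "a \<le> b" "b \<le> T" for a b
  proof -
    have ib: "F integrable_on {t0..b}" by (rule integrable_subinterval_real[OF Fint]) (use ab in auto)
    have "F integrable_on {a..b}" by (rule integrable_subinterval_real[OF Fint]) (use ab in auto)
    then have h: "(F has_integral integral {a..b} F) {a..b}" by blast
    have "integral {t0..a} F + integral {a..b} F = integral {t0..b} F"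
      by (rule Henstock_Kurzweil_Integration.integral_combine[OF _ _ ib]) (use ab in auto)
    moreover have "x a = x t0 + integral {t0..a} F" by (rule xeq) (use ab in auto)
    moreover have "x b = x t0 + integral {t0..b} F" by (rule xeq) (use ab in auto)
    ultimately have "integral {a..b} F = x b - x a" by (simp add: algebra_simps)
    with h show ?thesis by simp
  qed
  have "compact (x ` {t0..T})" by (rule compact_continuous_image[OF xcont]) simp
  hence "bounded (x ` {t0..T})" by (rule compact_imp_bounded)
  then obtain B where "\<forall>y\<in>x ` {t0..T}. norm y \<le> B" by (auto simp: bounded_iff)
  hence B: "\<And>\<tau>. \<tau> \<in> {t0..T} \<Longrightarrow> norm (x \<tau>) \<le> B" by auto
  have B0: "B \<ge> 0" using B[of t0] tT by (meson atLeastAtMost_iff norm_ge_zero order.trans order_refl)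
  have SB: "\<bar>fst (x \<tau>)\<bar> \<le> B" and IB: "\<bar>snd (x \<tau>)\<bar> \<le> B" if "\<tau> \<in> {t0..T}" for \<tau>
    using B[OF that] fst_le_norm[of "x \<tau>"] snd_le_norm[of "x \<tau>"] by auto
  have babs: "\<bar>\<beta> \<tau>\<bar> \<le> bmax" if "\<tau> \<in> {t0..T}" for \<tau> using bet[of \<tau>] that bmin by auto
  have prodB: "\<bar>\<beta> \<tau> * fst (x \<tau>) * snd (x \<tau>)\<bar> \<le> bmax*B^2" if "\<tau> \<in> {t0..T}" for \<tau>
    by (rule abs3) (use babs SB IB that in auto)
  define M where "M = 2*bmax*B^2 + \<gamma>*B"
  have FM: "norm (F \<tau>) \<le> M" if "\<tau> \<in> {t0..T}" for \<tau>
  proof -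
    have "norm (F \<tau>) \<le> norm (- \<beta> \<tau> * fst (x \<tau>) * snd (x \<tau>)) + norm (\<beta> \<tau> * fst (x \<tau>) * snd (x \<tau>) - \<gamma> * snd (x \<tau>))"
      unfolding F_def sir_f_def by (rule norm_Pair_le)
    also have "\<dots> \<le> bmax*B^2 + (bmax*B^2 + \<gamma>*B)"
    proof (intro add_mono)
      show "norm (- \<beta> \<tau> * fst (x \<tau>) * snd (x \<tau>)) \<le> bmax*B^2" using prodB[OF that] by simp
      have "\<bar>\<gamma> * snd (x \<tau>)\<bar> \<le> \<gamma>*B" using IB[OF that] g by (simp add: abs_mult)
      then show "norm (\<beta> \<tau> * fst (x \<tau>) * snd (x \<tau>) - \<gamma> * snd (x \<tau>)) \<le> bmax*B^2 + \<gamma>*B"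
        using prodB[OF that] by simp
    qed
    finally show ?thesis by (simp add: M_def)
  qed
  have M0: "M \<ge> 0" using B0 bm g by (simp add: M_def)
  have lip: "norm (x b - x a) \<le> M*(b-a)" if "t0 \<le> a" "a \<le> b" "b \<le> T" for a b
    by (rule path_lip[OF _ incr]) (use that FM in auto)
  define A where "A = \<gamma> + bmax*B"
  have A0: "A \<ge> 0" using g bm B0 by (simp add: A_def)
  have key: "snd (x t') \<ge> snd (x t0) * exp (-A*(t'-t0))"
    if t': "t' \<in> {t0..T}" and pos: "\<forall>\<tau>\<in>{t0..t'}. snd (x \<tau>) > 0" for t'
  proof -
    have cI: "continuous_on {t0..t'} (\<lambda>\<tau>. snd (x \<tau>))"
      by (rule continuous_on_snd[OF continuous_on_subset[OF xcont]]) (use t' in auto)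
    obtain \<tau>m where \<tau>m: "\<tau>m \<in> {t0..t'}" "\<And>\<tau>. \<tau> \<in> {t0..t'} \<Longrightarrow> snd (x \<tau>m) \<le> snd (x \<tau>)"
      using continuous_attains_inf[OF compact_Icc _ cI] t' by auto
    define m where "m = snd (x \<tau>m)"
    have m0: "m > 0" using pos \<tau>m by (simp add: m_def)
    have mle: "\<And>\<tau>. \<tau> \<in> {t0..t'} \<Longrightarrow> m \<le> snd (x \<tau>)" using \<tau>m by (simp add: m_def)
    have "(\<lambda>\<tau>. - ln (snd (x \<tau>))) t' - (\<lambda>\<tau>. - ln (snd (x \<tau>))) t0 \<le> A*(t'-t0)"
    proof (rule incr_bound[where g = "\<lambda>\<tau>. - ln (snd (x \<tau>))" and K = "A*M/m + (1/m^2)*M^2"])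
      show "t0 \<le> t'" using t' by simp
      show "0 \<le> A*M/m + (1/m^2)*M^2" using A0 M0 m0 by (intro add_nonneg_nonneg mult_nonneg_nonneg divide_nonneg_pos) auto
      fix s u assume su: "t0 \<le> s" "s \<le> u" "u \<le> t'"
      have sT: "u \<le> T" using su t' by simp
      have "(\<lambda>v. - ln (snd v)) (x u) - (\<lambda>v. - ln (snd v)) (x s)
            \<le> A*(u-s) + (A*M/m + (1/m^2)*M^2)*(u-s)^2"
      proof -
        have intsu: "(F has_integral (x u - x s)) {s..u}" by (rule incr) (use su sT in auto)
        have Fsu: "\<And>\<tau>. \<tau> \<in> {s..u} \<Longrightarrow> norm (F \<tau>) \<le> M" using FM su sT by auto
        have lt: "- ln (snd (x u)) - - ln (snd (x s)) \<le> - (snd (x u) - snd (x s))/snd (x s) + (1/m^2) * (snd (x u) - snd (x s))^2"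
          by (rule log_taylor) (use mle su m0 in auto)
        have "(snd (x u) - snd (x s))^2 \<le> (norm (x u - x s))^2"
          using power_mono[OF snd_le_norm[of "x u - x s"] abs_ge_zero, of 2] by simp
        hence "(1/m^2) * (snd (x u) - snd (x s))^2 \<le> (1/m^2) * (norm (x u - x s))^2"
          by (rule mult_left_mono) simp
        moreover have "(0, - 1 / snd (x s)) \<bullet> (x u - x s) = - (snd (x u) - snd (x s))/snd (x s)"
          by (simp add: inner_pair_real diff_divide_distrib)
        ultimately have tay: "- ln (snd (x u)) - - ln (snd (x s)) \<le> (0, - 1 / snd (x s)) \<bullet> (x u - x s) + 1 / m\<^sup>2 * (norm (x u - x s))\<^sup>2"
          using lt by linarith
        have lin: "(0, - 1 / snd (x s)) \<bullet> F \<tau> \<le> A + A * M / m * (u - s)" if \<tau>: "\<tau> \<in> {s..u}" for \<tau>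
        proof -
        have \<tau>T: "\<tau> \<in> {t0..T}" "\<tau> \<in> {t0..t'}" using \<tau> su sT by auto
        have sin: "s \<in> {t0..t'}" using su by auto
        have ws: "snd (x s) \<noteq> 0" using bspec[OF pos sin] by simp
        have e: "(0, - 1 / snd (x s)) \<bullet> F \<tau> = snd (x \<tau>) * (\<gamma> - \<beta> \<tau> * fst (x \<tau>)) / snd (x s)"
          using ws by (simp add: inner_pair_real F_def sir_f_def field_simps)
        have gA: "\<gamma> - \<beta> \<tau> * fst (x \<tau>) \<le> A"
        proof -
          have "\<bar>\<beta> \<tau> * fst (x \<tau>)\<bar> = \<bar>\<beta> \<tau>\<bar> * \<bar>fst (x \<tau>)\<bar>" by (rule abs_mult)
          also have "\<dots> \<le> bmax * B" by (rule mult_mono) (use babs[OF \<tau>T(1)] SB[OF \<tau>T(1)] B0 in auto)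
          finally have "\<bar>\<beta> \<tau> * fst (x \<tau>)\<bar> \<le> bmax * B" .
          thus ?thesis by (simp add: A_def)
        qed
        have dI: "snd (x \<tau>) - snd (x s) \<le> M * (u - s)"
        proof -
          have "snd (x \<tau>) - snd (x s) \<le> norm (x \<tau> - x s)" using snd_le_norm[of "x \<tau> - x s"] by simp
          also have "\<dots> \<le> M*(\<tau> - s)" by (rule lip) (use \<tau> su sT in auto)
          also have "\<dots> \<le> M*(u-s)" using M0 \<tau> by (intro mult_left_mono) auto
          finally show ?thesis .
        qed
        have "snd (x \<tau>) * (\<gamma> - \<beta> \<tau> * fst (x \<tau>)) / snd (x s) \<le> A + A*M/m*(u-s)"
          by (rule lin_log) (use bspec[OF pos \<tau>T(2)] mle[OF sin] m0 gA A0 dI M0 su in auto)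
        then show ?thesis using e by simp
        qed
        show ?thesis
          by (rule path_step[where \<Phi> = "\<lambda>v. - ln (snd v)", OF su(2) intsu Fsu _ lin]) (use tay m0 in auto)
      qed
      then show "(\<lambda>\<tau>. - ln (snd (x \<tau>))) u - (\<lambda>\<tau>. - ln (snd (x \<tau>))) s \<le> A*(u-s) + (A*M/m + (1/m^2)*M^2)*(u-s)^2"
        by simp
    qed
    hence "ln (snd (x t0)) + (-A*(t'-t0)) \<le> ln (snd (x t'))" by simp
    hence "exp (ln (snd (x t0)) + (-A*(t'-t0))) \<le> exp (ln (snd (x t')))" by simp
    moreover have "exp (ln (snd (x t0)) + (-A*(t'-t0))) = snd (x t0) * exp (-A*(t'-t0))" unfolding exp_add using I0 by simp
    moreover have "exp (ln (snd (x t'))) = snd (x t')" using pos t' by simp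
    ultimately show ?thesis by simp
  qed
  define \<kappa> where "\<kappa> = snd (x t0) * exp (-A*(T-t0))"
  have \<kappa>0: "\<kappa> > 0" using I0 by (simp add: \<kappa>_def)
  have \<kappa>le: "\<kappa> \<le> snd (x t0) * exp (-A*(t'-t0))" if "t' \<le> T" for t'
  proof -
    have "A*(t'-t0) \<le> A*(T-t0)" using A0 that by (intro mult_left_mono) auto
    hence "exp(-A*(T-t0)) \<le> exp(-A*(t'-t0))" by simp
    thus ?thesis unfolding \<kappa>_def by (rule mult_left_mono) (use I0 in auto)
  qed
  have pos: "\<forall>\<tau>\<in>{t0..T}. snd (x \<tau>) > 0"
  proof (rule ccontr)
    assume neg: "\<not> (\<forall>\<tau>\<in>{t0..T}. snd (x \<tau>) > 0)"
    define Z where "Z = {t0..T} \<inter> (\<lambda>\<tau>. snd (x \<tau>)) -` {..0}"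
    have cI: "continuous_on {t0..T} (\<lambda>\<tau>. snd (x \<tau>))" by (rule continuous_on_snd[OF xcont])
    have "closed Z" unfolding Z_def by (rule continuous_closed_preimage[OF cI]) auto
    moreover have "bounded Z" by (rule bounded_subset[of "{t0..T}"]) (auto simp: Z_def)
    ultimately have cZ: "compact Z" by (simp add: compact_eq_bounded_closed)
    have nZ: "Z \<noteq> {}" using neg by (auto simp: Z_def not_less)
    have "\<exists>s\<in>Z. \<forall>z\<in>Z. s \<le> z" by (rule compact_attains_inf[OF cZ nZ])
    then obtain t1 where t1: "t1 \<in> Z" "\<forall>z\<in>Z. t1 \<le> z" by blast
    have t1T: "t1 \<in> {t0..T}" "snd (x t1) \<le> 0" using t1 by (auto simp: Z_def)
    have before: "snd (x \<tau>) > 0" if "\<tau> \<in> {t0..T}" "\<tau> < t1" for \<tau>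
    proof (rule ccontr)
      assume "\<not> snd (x \<tau>) > 0"
      hence "\<tau> \<in> Z" using that by (simp add: Z_def)
      with t1(2) have "t1 \<le> \<tau>" by blast
      thus False using that by simp
    qed
    have "continuous_on {t0..t1} (\<lambda>\<tau>. snd (x \<tau>))" by (rule continuous_on_subset[OF cI]) (use t1T in auto)
    moreover have "snd (x t1) \<le> \<kappa>/2" using t1T \<kappa>0 by simp
    moreover have "\<kappa>/2 \<le> snd (x t0)" using \<kappa>0 \<kappa>le[OF tT] by simp
    ultimately obtain t' where t': "t0 \<le> t'" "t' \<le> t1" "snd (x t') = \<kappa>/2"
      using IVT2'[of "\<lambda>\<tau>. snd (x \<tau>)" t1 "\<kappa>/2" t0] t1T by force
    have "t' \<noteq> t1" using t' t1T \<kappa>0 by auto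
    hence "t' < t1" using t' by simp
    have "\<forall>\<tau>\<in>{t0..t'}. snd (x \<tau>) > 0" using before \<open>t' < t1\<close> t1T by auto
    moreover have "t' \<in> {t0..T}" using t' t1T by simp
    ultimately have "snd (x t') \<ge> snd (x t0) * exp (-A*(t'-t0))" using key by blast
    moreover have "\<kappa> \<le> snd (x t0) * exp (-A*(t'-t0))" using \<kappa>le t' t1T by auto
    ultimately show False using t' \<kappa>0 by simp
  qed
  have "PP c (x t) - PP c (x t0) \<le> 0*(t-t0)"
  proof (rule incr_bound[where g = "\<lambda>\<tau>. PP c (x \<tau>)" and K = "M/c*bmax*B^2 + (1/c)*M^2"])
    show "t0 \<le> t" using t by simp
    show "0 \<le> M/c*bmax*B^2 + (1/c)*M^2" using M0 cp bm
      by (intro add_nonneg_nonneg mult_nonneg_nonneg divide_nonneg_pos) auto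
    fix s u assume su: "t0 \<le> s" "s \<le> u" "u \<le> t"
    have sT: "u \<le> T" using su t by simp
    have intsu: "(F has_integral (x u - x s)) {s..u}" by (rule incr) (use su sT in auto)
    have Fsu: "\<And>\<tau>. \<tau> \<in> {s..u} \<Longrightarrow> norm (F \<tau>) \<le> M" using FM su sT by auto
    have pt: "psi c (fst (x u)) - psi c (fst (x s)) \<le> dpsi c (fst (x s)) * (fst (x u) - fst (x s)) + (fst (x u) - fst (x s))^2/c"
      by (rule psi_taylor[OF cp])
    have "(fst (x u) - fst (x s))^2 \<le> (norm (x u - x s))^2"
      using power_mono[OF fst_le_norm[of "x u - x s"] abs_ge_zero, of 2] by simp
    hence "(fst (x u) - fst (x s))^2/c \<le> 1/c * (norm (x u - x s))^2" using cp
      by (simp add: divide_right_mono)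
    moreover have "(dpsi c (fst (x s)), 1) \<bullet> (x u - x s) = dpsi c (fst (x s)) * (fst (x u) - fst (x s)) + (snd (x u) - snd (x s))"
      by (simp add: inner_pair_real)
    ultimately have tay: "PP c (x u) - PP c (x s) \<le> (dpsi c (fst (x s)), 1) \<bullet> (x u - x s) + 1/c * (norm (x u - x s))\<^sup>2"
      using pt unfolding PP_def by linarith
    have lin: "(dpsi c (fst (x s)), 1) \<bullet> F \<tau> \<le> 0 + M/c*bmax*B^2*(u-s)" if \<tau>: "\<tau> \<in> {s..u}" for \<tau>
    proof -
      have \<tau>T: "\<tau> \<in> {t0..T}" using \<tau> su sT by auto
      define S where "S = fst (x \<tau>)"
      define I where "I = snd (x \<tau>)"
      define b where "b = \<beta> \<tau>"
      have e: "(dpsi c (fst (x s)), 1) \<bullet> F \<tau> = (dpsi c S * (- b * S * I) + (b * S * I - \<gamma> * I)) + (dpsi c (fst (x s)) - dpsi c S) * (- b * S * I)"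
        by (simp add: inner_pair_real F_def sir_f_def S_def I_def b_def algebra_simps)
      have bt: "bmin \<le> b" "b \<le> bmax" using bet[of \<tau>] \<tau>T by (auto simp: b_def)
      have Ip: "I \<ge> 0" using bspec[OF pos \<tau>T] by (simp add: I_def)
      have s1: "dpsi c S * (- b * S * I) + (b * S * I - \<gamma> * I) \<le> 0"
        by (rule sign_P[OF g bm c]) (use bt bmin Ip in auto)
      have "(dpsi c (fst (x s)) - dpsi c S) * (- b * S * I) \<le> \<bar>(dpsi c (fst (x s)) - dpsi c S) * (- b * S * I)\<bar>"
        by (rule abs_ge_self)
      also have "\<dots> = \<bar>dpsi c (fst (x s)) - dpsi c S\<bar> * \<bar>b * S * I\<bar>"
        by (simp add: abs_mult)
      also have "\<dots> \<le> (\<bar>fst (x s) - S\<bar>/c) * (bmax*B^2)"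
        by (rule mult_mono) (use dpsi_lip[OF cp] prodB[OF \<tau>T] cp in \<open>auto simp: S_def I_def b_def\<close>)
      also have "\<dots> \<le> (M*(u-s)/c) * (bmax*B^2)"
      proof -
        have "\<bar>fst (x s) - S\<bar> = \<bar>fst (x \<tau> - x s)\<bar>" by (simp add: S_def abs_minus_commute)
        also have "\<dots> \<le> norm (x \<tau> - x s)" by (rule fst_le_norm)
        also have "\<dots> \<le> M*(\<tau> - s)" by (rule lip) (use \<tau> su sT in auto)
        also have "\<dots> \<le> M*(u-s)" using M0 \<tau> by (intro mult_left_mono) auto
        finally have "\<bar>fst (x s) - S\<bar> \<le> M*(u-s)" .
        thus ?thesis using cp bm by (intro mult_right_mono divide_right_mono) auto
      qed
      also have "(M*(u-s)/c) * (bmax*B^2) = M/c*bmax*B^2*(u-s)" by (simp add: field_simps)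
      finally have s2: "(dpsi c (fst (x s)) - dpsi c S) * (- b * S * I) \<le> M/c*bmax*B^2*(u-s)" .
      show ?thesis using e s1 s2 by simp
    qed
    have "PP c (x u) - PP c (x s) \<le> 0*(u-s) + (M/c*bmax*B^2 + (1/c)*M^2)*(u-s)^2"
      by (rule path_step[where \<Phi> = "PP c", OF su(2) intsu Fsu tay lin]) (use cp in auto)
    then show "(\<lambda>\<tau>. PP c (x \<tau>)) u - (\<lambda>\<tau>. PP c (x \<tau>)) s \<le> 0*(u-s) + (M/c*bmax*B^2 + (1/c)*M^2)*(u-s)^2"
      by simp
  qed
  hence "PP c (x t) \<le> PP c (x t0)" by simp
  moreover have "snd (x t) \<le> PP c (x t)" using psi_nonneg[OF cp] by (simp add: PP_def)
  ultimately show ?thesis using P0 by simp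
qed



definition sigi :: "real \<Rightarrow> real \<Rightarrow> (real \<Rightarrow> real) \<Rightarrow> real \<Rightarrow> real" where
  "sigi c R G u = (THE S. c \<le> S \<and> S < R \<and> G S = u)"

locale inv1 =
  fixes c R :: real and g G :: "real \<Rightarrow> real"
  assumes cR: "c < R"
    and gc: "continuous_on {c..<R} g"
    and gneg: "\<And>S. S \<in> {c..<R} \<Longrightarrow> g S < 0"
    and Gdef: "G = (\<lambda>S. integral {c..S} (\<lambda>s. 1 / g s))"
begin

lemma igc: "S1 < R \<Longrightarrow> continuous_on {c..S1} (\<lambda>s. 1 / g s)"
proof (rule continuous_on_divide)
  assume "S1 < R"
  show "continuous_on {c..S1} g" by (rule continuous_on_subset[OF gc]) (use \<open>S1 < R\<close> in auto)
  show "\<forall>x\<in>{c..S1}. g x \<noteq> 0" using gneg \<open>S1 < R\<close> by (metis atLeastAtMost_iff atLeastLessThan_iff le_less_trans less_irrefl)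
qed (rule continuous_on_const)

lemma G_c: "G c = 0" by (simp add: Gdef)

lemma G_cont: "S1 < R \<Longrightarrow> continuous_on {c..S1} G"
  unfolding Gdef by (rule indefinite_integral_continuous_1[OF integrable_continuous_real[OF igc]])

lemma G_deriv:
  assumes "c < S" "S < R"
  shows "(G has_real_derivative 1 / g S) (at S)"
proof -
  define S' where "S' = (S + R)/2"
  have S': "S < S'" "S' < R" using assms by (auto simp: S'_def)
  have "((\<lambda>x. integral {c..x} (\<lambda>s. 1 / g s)) has_real_derivative 1 / g S) (at S within {c..S'})"
    by (rule integral_has_real_derivative[OF igc[OF S'(2)]]) (use assms S' in auto)
  moreover have "at S within {c..S'} = at S" by (rule at_within_interior) (use assms S' in auto)
  ultimately show ?thesis by (simp add: Gdef)
qed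

lemma G_strict:
  assumes "c \<le> a" "a < b" "b < R"
  shows "G b < G a"
proof -
  have "G a > G b"
  proof (rule DERIV_neg_imp_decreasing_open[OF assms(2)])
    fix x assume "a < x" "x < b"
    hence "c < x" "x < R" using assms by auto
    thus "\<exists>y. DERIV G x :> y \<and> y < 0" using G_deriv gneg[of x] by (intro exI[of _ "1 / g x"]) auto
  next
    show "continuous_on {a..b} G" by (rule continuous_on_subset[OF G_cont[OF assms(3)]]) (use assms in auto)
  qed
  thus ?thesis .
qed

lemma G_le0: "c \<le> S \<Longrightarrow> S < R \<Longrightarrow> G S \<le> 0"
  using G_strict[of c S] G_c by (cases "S = c") auto

lemma G_inj: "c \<le> a \<Longrightarrow> a < R \<Longrightarrow> c \<le> b \<Longrightarrow> b < R \<Longrightarrow> G a = G b \<Longrightarrow> a = b"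
  using G_strict[of a b] G_strict[of b a] by (cases a b rule: linorder_cases) auto

lemma sigma_G: "c \<le> S \<Longrightarrow> S < R \<Longrightarrow> sigi c R G (G S) = S"
  unfolding sigi_def by (rule the_equality) (auto intro: G_inj)

lemma G_range:
  assumes "c \<le> S1" "S1 < R" "G S1 \<le> u" "u \<le> 0"
  shows "\<exists>S. c \<le> S \<and> S \<le> S1 \<and> G S = u"
  using IVT2'[of G S1 u c] assms G_c G_cont[OF assms(2)] by auto

lemma sigma_props:
  assumes "c \<le> S1" "S1 < R" "G S1 \<le> u" "u \<le> 0"
  shows "c \<le> sigi c R G u" "sigi c R G u \<le> S1" "G (sigi c R G u) = u"
proof -
  obtain S where S: "c \<le> S" "S \<le> S1" "G S = u" using G_range[OF assms] by blast
  have "sigi c R G u = S" using sigma_G[of S] S assms by auto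
  thus "c \<le> sigi c R G u" "sigi c R G u \<le> S1" "G (sigi c R G u) = u" using S by auto
qed

lemma G_image: assumes "c \<le> S1" "S1 < R" shows "G ` {c..S1} = {G S1..0}"
proof
  show "G ` {c..S1} \<subseteq> {G S1..0}"
  proof
    fix y assume "y \<in> G ` {c..S1}"
    then obtain S where S: "c \<le> S" "S \<le> S1" "y = G S" by auto
    have "G S1 \<le> G S" using G_strict[of S S1] S assms by (cases "S = S1") auto
    moreover have "G S \<le> 0" using G_le0 S assms by auto
    ultimately show "y \<in> {G S1..0}" using S by auto
  qed
  show "{G S1..0} \<subseteq> G ` {c..S1}"
  proof
    fix u assume "u \<in> {G S1..0}"
    then obtain S where "c \<le> S" "S \<le> S1" "G S = u" using G_range[OF assms] by auto
    thus "u \<in> G ` {c..S1}" by force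
  qed
qed

lemma sigma_cont: assumes "c \<le> S1" "S1 < R" shows "continuous_on {G S1..0} (sigi c R G)"
proof -
  have "continuous_on (G ` {c..S1}) (sigi c R G)"
    by (rule continuous_on_inv[OF G_cont[OF assms(2)]]) (use sigma_G assms in auto)
  thus ?thesis using G_image[OF assms] by simp
qed

lemma sigma_deriv:
  assumes "c \<le> S1" "S1 < R" "G S1 < u" "u < 0"
  shows "(sigi c R G has_real_derivative g (sigi c R G u)) (at u)"
proof -
  let ?s = "sigi c R G"
  have p: "c \<le> ?s u" "?s u \<le> S1" "G (?s u) = u" using sigma_props[OF assms(1,2)] assms by auto
  have "?s u \<noteq> c" using p G_c assms by auto
  moreover have "?s u \<noteq> S1" using p assms by auto
  ultimately have i: "c < ?s u" "?s u < R" using p assms by auto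
  have gne: "g (?s u) \<noteq> 0" using gneg[of "?s u"] i by auto
  have "DERIV ?s u :> inverse (1 / g (?s u))"
  proof (rule DERIV_inverse_function[where f = G and a = "G S1" and b = 0])
    show "DERIV G (?s u) :> 1 / g (?s u)" by (rule G_deriv[OF i])
    show "1 / g (?s u) \<noteq> 0" using gne by simp
    show "G S1 < u" "u < 0" using assms by auto
    show "G (?s y) = y" if "G S1 < y" "y < 0" for y using sigma_props[OF assms(1,2), of y] that by auto
    show "isCont ?s u"
      by (rule continuous_on_interior[OF sigma_cont[OF assms(1,2)]]) (use assms in auto)
  qed
  thus ?thesis using gne by simp
qed

end



definition phi :: "real \<Rightarrow> real \<Rightarrow> real \<Rightarrow> real" where "phi c h S = h - S + c * ln S"
definition gg :: "real \<Rightarrow> real \<Rightarrow> real \<Rightarrow> real \<Rightarrow> real" where "gg bmax c h S = - bmax * S * phi c h S"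
definition GG :: "real \<Rightarrow> real \<Rightarrow> real \<Rightarrow> real \<Rightarrow> real" where
  "GG bmax c h = (\<lambda>S. integral {c..S} (\<lambda>s. 1 / gg bmax c h s))"

lemma phi_deriv: "S > 0 \<Longrightarrow> (phi c h has_real_derivative (-1 + c/S)) (at S)"
  unfolding phi_def[abs_def] by (auto intro!: derivative_eq_intros simp: field_simps)

lemma phi_cont: "(\<And>S. S \<in> A \<Longrightarrow> S > 0) \<Longrightarrow> continuous_on A (phi c h)"
  unfolding phi_def[abs_def] by (intro continuous_intros) auto

lemma phi_strict:
  assumes c: "c > 0" and "c \<le> a" "a < b"
  shows "phi c h b < phi c h a"
proof -
  have "phi c h a > phi c h b"
  proof (rule DERIV_neg_imp_decreasing_open[OF assms(3)])
    fix x assume x: "a < x" "x < b"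
    have "c / x < 1" using x assms by (simp add: divide_less_eq)
    thus "\<exists>y. DERIV (phi c h) x :> y \<and> y < 0" using phi_deriv[of x c h] x assms
      by (intro exI[of _ "-1 + c/x"]) auto
  next
    show "continuous_on {a..b} (phi c h)" by (rule phi_cont) (use assms in auto)
  qed
  thus ?thesis .
qed

lemma phi_mono: "c > 0 \<Longrightarrow> c \<le> a \<Longrightarrow> a \<le> b \<Longrightarrow> phi c h b \<le> phi c h a"
  using phi_strict[of c a b h] by (cases "a = b") auto

lemma phi_le: assumes "c > 0" "c \<le> s" "s \<le> R" shows "phi c h s - phi c h R \<le> R - s"
proof -
  have "ln s \<le> ln R" using assms by simp
  hence "c * ln s \<le> c * ln R" using assms by simp
  thus ?thesis by (simp add: phi_def)
qed

lemma phi_root: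
  assumes c: "c > 0" and pc: "phi c h c > 0"
  shows "\<exists>R>c. phi c h R = 0"
proof -
  define q where "q = h + c * ln (2*c)"
  define S1 where "S1 = 2 * \<bar>q\<bar> + 2*c"
  have S1c: "S1 > c" unfolding S1_def using c abs_ge_zero[of q] by linarith
  have "ln (S1/(2*c)) \<le> S1/(2*c) - 1" using ln_le_minus_one[of "S1/(2*c)"] S1c c by simp
  hence "ln S1 - ln (2*c) \<le> S1/(2*c) - 1" using S1c c by (simp add: ln_div)
  hence "c * (ln S1 - ln (2*c)) \<le> c * (S1/(2*c) - 1)" using c by (simp add: mult_left_mono)
  moreover have "c * (S1/(2*c) - 1) = S1/2 - c" using c by (simp add: field_simps)
  moreover have "c * (ln S1 - ln (2*c)) = c * ln S1 - c * ln (2*c)" by (simp add: algebra_simps)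
  ultimately have "c * ln S1 \<le> c * ln (2*c) + S1/2 - c" by linarith
  hence "phi c h S1 \<le> h + c * ln (2*c) - c - S1/2" by (simp add: phi_def)
  also have "\<dots> = q - c - S1/2" by (simp add: q_def)
  also have "\<dots> \<le> 0"
  proof -
    have "S1/2 = \<bar>q\<bar> + c" by (simp add: S1_def)
    thus ?thesis using c abs_ge_self[of q] by linarith
  qed
  finally have "phi c h S1 \<le> 0" .
  then obtain R where R: "c \<le> R" "R \<le> S1" "phi c h R = 0"
    using IVT2'[of "phi c h" S1 0 c] pc S1c phi_cont[of "{c..S1}" c h] c by force
  have "R \<noteq> c" using R pc by auto
  hence "c < R" using R by simp
  thus ?thesis using R by (intro exI[of _ R]) simp
qed

lemma phi_pos: assumes "c > 0" "c \<le> S" "S < R" "phi c h R = 0" shows "phi c h S > 0"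
  using phi_strict[OF assms(1,2,3), of h] assms by simp

lemma inv1_SIR:
  assumes c: "c > 0" and bm: "bmax > 0" and R: "c < R" "phi c h R = 0"
  shows "inv1 c R (gg bmax c h) (GG bmax c h)"
proof
  show "c < R" by (rule R)
  show "continuous_on {c..<R} (gg bmax c h)"
    unfolding gg_def[abs_def] by (intro continuous_intros phi_cont) (use c in auto)
  show "gg bmax c h S < 0" if "S \<in> {c..<R}" for S
  proof -
    have "phi c h S > 0" using phi_pos[OF c _ _ R(2)] that by auto
    moreover have "S > 0" using that c by auto
    ultimately show ?thesis using bm by (simp add: gg_def mult_pos_pos)
  qed
  show "GG bmax c h = (\<lambda>S. integral {c..S} (\<lambda>s. 1 / gg bmax c h s))" by (simp add: GG_def)
qed



lemma dinv: "S \<noteq> 0 \<Longrightarrow> ((\<lambda>S. 1 - c/S) has_real_derivative c/S^2) (at S)"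
  by (auto intro!: derivative_eq_intros simp: field_simps power2_eq_square)

lemma GG_diverge:
  assumes c: "c > 0" and bm: "bmax > 0" and R: "c < R" "phi c h R = 0" and u: "u \<le> 0"
  shows "\<exists>S1. c \<le> S1 \<and> S1 < R \<and> GG bmax c h S1 \<le> u"
proof -
  interpret inv1 c R "gg bmax c h" "GG bmax c h" by (rule inv1_SIR[OF c bm R])
  define E where "E = (\<lambda>S. (ln (R - S) - ln (R - c)) / (bmax*R))"
  define S1 where "S1 = R - (R - c) * exp (u*bmax*R)"
  have Rp: "R > 0" using c R by simp
  have "u*bmax*R \<le> 0" using u bm Rp by (simp add: mult_nonpos_nonneg)
  hence ex: "exp (u*bmax*R) \<le> 1" "0 < exp (u*bmax*R)" by auto
  have "(R - c) * exp (u*bmax*R) \<le> (R - c)" using ex R by (simp add: mult_left_le)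
  hence S1c: "c \<le> S1" by (simp add: S1_def)
  have "0 < (R - c) * exp (u*bmax*R)" using ex R by simp
  hence S1R: "S1 < R" by (simp add: S1_def)
  have ES1: "E S1 = u"
  proof -
    have "R - S1 = (R - c) * exp (u*bmax*R)" by (simp add: S1_def)
    hence "ln (R - S1) = ln (R - c) + u*bmax*R" using R by (simp add: ln_mult)
    thus ?thesis using bm Rp by (simp add: E_def)
  qed
  have i1: "((\<lambda>s. 1 / gg bmax c h s) has_integral GG bmax c h S1) {c..S1}"
    using integrable_continuous_real[OF igc[OF S1R]] by (simp add: GG_def has_integral_integral)
  have i2: "((\<lambda>s. -1/(bmax*R*(R-s))) has_integral (E S1 - E c)) {c..S1}"
  proof (rule fundamental_theorem_of_calculus_interior[OF S1c])
    show "continuous_on {c..S1} E" unfolding E_def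
      by (intro continuous_intros) (use S1R R bm Rp in auto)
    fix s assume s: "s \<in> {c<..<S1}"
    hence sR: "s < R" using S1R by simp
    have "(E has_real_derivative -1/(bmax*R*(R-s))) (at s)" unfolding E_def
      using sR R bm Rp by (auto intro!: derivative_eq_intros simp: field_simps)
    thus "(E has_vector_derivative -1/(bmax*R*(R-s))) (at s)"
      by (simp add: has_real_derivative_iff_has_vector_derivative)
  qed
  have Ec: "E c = 0" by (simp add: E_def)
  have "GG bmax c h S1 \<le> E S1 - E c"
  proof (rule has_integral_le[OF i1 i2])
    fix s assume s: "s \<in> {c..S1}"
    have sR: "s < R" and sc: "c \<le> s" using s S1R by auto
    have sp: "s > 0" using sc c by simp
    have ph: "phi c h s > 0" by (rule phi_pos[OF c sc sR R(2)])
    have phl: "phi c h s \<le> R - s" using phi_le[OF c sc, of R h] sR R(2) by simp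
    have "bmax * s * phi c h s \<le> bmax * R * (R - s)"
      using bm sp ph phl sR by (intro mult_mono) auto
    moreover have p1: "0 < bmax * s * phi c h s" using bm sp ph by simp
    moreover have p2: "0 < bmax * R * (R - s)" using bm Rp sR by simp
    ultimately have "1 / (bmax * R * (R - s)) \<le> 1 / (bmax * s * phi c h s)"
      using mult_pos_pos[OF p2 p1] by (intro divide_left_mono) auto
    hence "- (1 / (bmax * s * phi c h s)) \<le> - (1 / (bmax * R * (R - s)))" by linarith
    thus "1 / gg bmax c h s \<le> -1/(bmax*R*(R-s))" by (simp add: gg_def)
  qed
  thus ?thesis using S1c S1R ES1 Ec by (intro exI[of _ S1]) auto
qed

lemma traj:
  assumes c: "c > 0" and bm: "bmax > 0" and gam: "\<gamma> = c * bmax" and R: "c < R" "phi c h R = 0"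
   and Sm: "c \<le> Sm" "Sm < R" and ab: "a \<le> b" "GG bmax c h Sm \<le> a + k" "b + k \<le> 0"
   and sdef: "\<sigma> = sigi c R (GG bmax c h)"
  shows "((\<lambda>\<tau>. sir_f \<gamma> (\<sigma> (\<tau>+k), phi c h (\<sigma> (\<tau>+k))) bmax) has_integral
            ((\<sigma> (b+k), phi c h (\<sigma> (b+k))) - (\<sigma> (a+k), phi c h (\<sigma> (a+k))))) {a..b}"
    and "((\<lambda>\<tau>. sir_adj \<gamma> (\<sigma> (\<tau>+k), phi c h (\<sigma> (\<tau>+k))) (1 - c/\<sigma> (\<tau>+k), 1) bmax) has_integral
            ((1 - c/\<sigma> (b+k), 1) - (1 - c/\<sigma> (a+k), 1))) {a..b}"
proof -
  interpret inv1 c R "gg bmax c h" "GG bmax c h" by (rule inv1_SIR[OF c bm R])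
  have rng: "GG bmax c h Sm \<le> \<tau> + k \<and> \<tau> + k \<le> 0" if "\<tau> \<in> {a..b}" for \<tau> using that ab by auto
  have sp: "c \<le> \<sigma> (\<tau>+k)" if "\<tau> \<in> {a..b}" for \<tau>
    using sigma_props(1)[OF Sm] rng[OF that] by (simp add: sdef)
  have scont: "continuous_on {a..b} (\<lambda>\<tau>. \<sigma> (\<tau>+k))"
    unfolding sdef by (rule continuous_on_compose2[OF sigma_cont[OF Sm], of "{a..b}" "\<lambda>\<tau>. \<tau> + k"])
      (use rng in \<open>auto intro!: continuous_intros\<close>)
  have pcont: "continuous_on {a..b} (\<lambda>\<tau>. phi c h (\<sigma> (\<tau>+k)))"
  proof (rule continuous_on_compose2[OF phi_cont[of "{c..}"] scont])
    show "(\<lambda>\<tau>. \<sigma> (\<tau>+k)) ` {a..b} \<subseteq> {c..}" using sp by auto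
  qed (use c in auto)
  have lcont: "continuous_on {a..b} (\<lambda>\<tau>. 1 - c / \<sigma> (\<tau>+k))"
    by (intro continuous_intros scont) (use sp c in fastforce)
  have ders: "((\<lambda>\<tau>. \<sigma> (\<tau>+k)) has_real_derivative gg bmax c h (\<sigma> (\<tau>+k))) (at \<tau>)"
    and spos: "\<sigma> (\<tau>+k) > 0"
    if "\<tau> \<in> {a<..<b}" for \<tau>
  proof -
    have r: "GG bmax c h Sm < \<tau> + k" "\<tau> + k < 0" using that ab by auto
    have "(\<sigma> has_real_derivative gg bmax c h (\<sigma> (\<tau>+k))) (at (\<tau> + k))"
      using sigma_deriv[OF Sm r] by (simp add: sdef)
    thus "((\<lambda>\<tau>. \<sigma> (\<tau>+k)) has_real_derivative gg bmax c h (\<sigma> (\<tau>+k))) (at \<tau>)"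
      by (simp add: DERIV_shift)
    show "\<sigma> (\<tau>+k) > 0" using sp[of \<tau>] that c by auto
  qed
  show "((\<lambda>\<tau>. sir_f \<gamma> (\<sigma> (\<tau>+k), phi c h (\<sigma> (\<tau>+k))) bmax) has_integral
            ((\<sigma> (b+k), phi c h (\<sigma> (b+k))) - (\<sigma> (a+k), phi c h (\<sigma> (a+k))))) {a..b}"
  proof (rule fundamental_theorem_of_calculus_interior[OF ab(1), where f = "\<lambda>\<tau>. (\<sigma> (\<tau>+k), phi c h (\<sigma> (\<tau>+k)))"])
    show "continuous_on {a..b} (\<lambda>\<tau>. (\<sigma> (\<tau>+k), phi c h (\<sigma> (\<tau>+k))))"
      by (intro continuous_on_Pair scont pcont)
    fix \<tau> assume \<tau>: "\<tau> \<in> {a<..<b}"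
    let ?s = "\<sigma> (\<tau>+k)"
    have d1: "((\<lambda>\<tau>. \<sigma> (\<tau>+k)) has_vector_derivative gg bmax c h ?s) (at \<tau>)"
      using ders[OF \<tau>] by (simp add: has_real_derivative_iff_has_vector_derivative)
    have "((\<lambda>\<tau>. phi c h (\<sigma> (\<tau>+k))) has_real_derivative (-1 + c/?s) * gg bmax c h ?s) (at \<tau>)"
      by (rule DERIV_chain2[OF phi_deriv[OF spos[OF \<tau>]] ders[OF \<tau>]])
    hence d2: "((\<lambda>\<tau>. phi c h (\<sigma> (\<tau>+k))) has_vector_derivative (-1 + c/?s) * gg bmax c h ?s) (at \<tau>)"
      by (simp add: has_real_derivative_iff_has_vector_derivative)
    have "(gg bmax c h ?s, (-1 + c/?s) * gg bmax c h ?s) = sir_f \<gamma> (?s, phi c h ?s) bmax"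
      using spos[OF \<tau>] by (simp add: gg_def sir_f_def gam field_simps)
    thus "((\<lambda>\<tau>. (\<sigma> (\<tau>+k), phi c h (\<sigma> (\<tau>+k)))) has_vector_derivative sir_f \<gamma> (?s, phi c h ?s) bmax) (at \<tau>)"
      using has_vector_derivative_Pair[OF d1 d2] by simp
  qed
  show "((\<lambda>\<tau>. sir_adj \<gamma> (\<sigma> (\<tau>+k), phi c h (\<sigma> (\<tau>+k))) (1 - c/\<sigma> (\<tau>+k), 1) bmax) has_integral
            ((1 - c/\<sigma> (b+k), 1) - (1 - c/\<sigma> (a+k), 1))) {a..b}"
  proof (rule fundamental_theorem_of_calculus_interior[OF ab(1), where f = "\<lambda>\<tau>. (1 - c/\<sigma> (\<tau>+k), 1::real)"])
    show "continuous_on {a..b} (\<lambda>\<tau>. (1 - c/\<sigma> (\<tau>+k), 1::real))"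
      by (intro continuous_on_Pair lcont continuous_on_const)
    fix \<tau> assume \<tau>: "\<tau> \<in> {a<..<b}"
    let ?s = "\<sigma> (\<tau>+k)"
    have "((\<lambda>\<tau>. 1 - c/\<sigma> (\<tau>+k)) has_real_derivative c/?s^2 * gg bmax c h ?s) (at \<tau>)"
      by (rule DERIV_chain2[OF dinv ders[OF \<tau>]]) (use spos[OF \<tau>] in simp)
    hence d1: "((\<lambda>\<tau>. 1 - c/\<sigma> (\<tau>+k)) has_vector_derivative c/?s^2 * gg bmax c h ?s) (at \<tau>)"
      by (simp add: has_real_derivative_iff_has_vector_derivative)
    have d2: "((\<lambda>\<tau>. 1::real) has_vector_derivative 0) (at \<tau>)" by simp
    have "(c/?s^2 * gg bmax c h ?s, 0) = sir_adj \<gamma> (?s, phi c h ?s) (1 - c/?s, 1) bmax"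
      using spos[OF \<tau>] by (simp add: gg_def sir_adj_def gam field_simps power2_eq_square)
    thus "((\<lambda>\<tau>. (1 - c/\<sigma> (\<tau>+k), 1::real)) has_vector_derivative sir_adj \<gamma> (?s, phi c h ?s) (1 - c/?s, 1) bmax) (at \<tau>)"
      using has_vector_derivative_Pair[OF d1 d2] by simp
  qed
qed



lemma PP_cont: assumes c: "c > 0" shows "continuous_on UNIV (PP c)"
proof -
  have "PP c = (\<lambda>y. snd y + (max (fst y) c - c * ln (max (fst y) c) - c + c * ln c))"
    by (auto simp: fun_eq_iff PP_def psi_def psi0_def)
  moreover have "continuous_on UNIV (\<lambda>y::real\<times>real. snd y + (max (fst y) c - c * ln (max (fst y) c) - c + c * ln c))"
    by (intro continuous_intros) (use c in \<open>auto simp: max_def\<close>)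
  ultimately show ?thesis by simp
qed

lemma PP_le_c: "fst y \<le> c \<Longrightarrow> PP c y = snd y"
  by (simp add: PP_def psi_def max_def psi0_def)

lemma PP_gt_c: "fst y > c \<Longrightarrow> PP c y = snd y + fst y - c * ln (fst y) - c + c * ln c"
  by (simp add: PP_def psi_def max_def psi0_def)

lemma in_M:
  assumes g: "\<gamma> > 0" and bmin: "0 < bmin" "bmin \<le> bmax" and c: "c = \<gamma>/bmax"
    and y: "0 < snd y" "snd y \<le> Imax" "PP c y \<le> Imax"
  shows "y \<in> MRPI \<gamma> bmin bmax Imax t0"
proof -
  have "snd (x t) \<le> Imax" if "admissible_input bmin bmax t0 \<beta>" "x t0 = y" "sir_solution \<gamma> \<beta> t0 T x" "t \<in> {t0..T}"
    for \<beta> T x t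
    by (rule invariance[OF g bmin c that(1) that(3)]) (use that y in auto)
  thus ?thesis using y by (auto simp: MRPI_def G_set_def sir_g_def)
qed

lemma not_M:
  assumes g: "\<gamma> > 0" and bmin: "0 < bmin" "bmin \<le> bmax" and c: "c = \<gamma>/bmax"
    and y: "0 < snd y" "snd y < Imax" "PP c y > Imax"
  shows "y \<notin> MRPI \<gamma> bmin bmax Imax t0"
proof
  assume yM: "y \<in> MRPI \<gamma> bmin bmax Imax t0"
  have bm: "bmax > 0" using bmin by simp
  have cp: "c > 0" using g bm c by simp
  have gam: "\<gamma> = c * bmax" using c bm by simp
  define S0 where "S0 = fst y"
  define I0 where "I0 = snd y"
  have S0c: "S0 > c"
  proof (rule ccontr)
    assume "\<not> S0 > c"
    hence "PP c y = snd y" using PP_le_c[of y c] by (simp add: S0_def)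
    thus False using y by simp
  qed
  have S0p: "S0 > 0" using S0c cp by simp
  define h where "h = S0 + I0 - c * ln S0"
  have phS0: "phi c h S0 = I0" by (simp add: phi_def h_def)
  have phc: "phi c h c = PP c y" using PP_gt_c[of c y] S0c by (simp add: phi_def h_def S0_def I0_def)
  have phcpos: "phi c h c > 0" using phc y by simp
  obtain R where R: "c < R" "phi c h R = 0" using phi_root[OF cp phcpos] by blast
  have S0R: "S0 < R"
  proof (rule ccontr)
    assume "\<not> S0 < R"
    hence "phi c h S0 \<le> phi c h R" using phi_mono[OF cp, of R S0 h] R by simp
    thus False using phS0 R y by (simp add: I0_def)
  qed
  interpret inv1 c R "gg bmax c h" "GG bmax c h" by (rule inv1_SIR[OF cp bm R])
  define \<sigma> where "\<sigma> = sigi c R (GG bmax c h)"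
  define u0 where "u0 = GG bmax c h S0"
  have u0: "u0 < 0" using G_strict[of c S0] S0c S0R G_c by (simp add: u0_def)
  define T where "T = t0 - u0"
  define X where "X = (\<lambda>t. (\<sigma> (t + (u0 - t0)), phi c h (\<sigma> (t + (u0 - t0)))))"
  have adm: "admissible_input bmin bmax t0 (\<lambda>_. bmax)" using bmin by (simp add: admissible_input_def)
  have s0: "\<sigma> u0 = S0" using sigma_G[of S0] S0c S0R by (simp add: \<sigma>_def u0_def)
  have X0: "X t0 = y" using s0 phS0 by (simp add: X_def S0_def I0_def)
  have sol: "sir_solution \<gamma> (\<lambda>_. bmax) t0 T X"
    unfolding sir_solution_def
  proof
    fix t assume t: "t \<in> {t0..T}"
    show "((\<lambda>s. sir_f \<gamma> (X s) bmax) has_integral X t - X t0) {t0..t}"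
      using traj(1)[where Sm=S0 and a=t0 and b=t and k="u0 - t0" and \<sigma>=\<sigma> and h=h, OF cp bm gam R _ S0R] S0c t
      by (simp add: X_def \<sigma>_def u0_def T_def)
  qed
  have TT: "T \<in> {t0..T}" using u0 by (simp add: T_def)
  have "X T \<in> G_set Imax" using yM adm X0 sol TT unfolding MRPI_def by blast
  moreover have "\<sigma> 0 = c" using sigma_G[of c] G_c R by (simp add: \<sigma>_def)
  hence "X T = (c, phi c h c)" by (simp add: X_def T_def)
  ultimately show False using phc y by (simp add: G_set_def sir_g_def)
qed



lemma frontier_char:
  assumes g: "\<gamma> > 0" and bmin: "0 < bmin" "bmin \<le> bmax" and c: "c = \<gamma>/bmax"
    and y: "0 < snd y" "snd y < Imax"
  shows "y \<in> frontier (MRPI \<gamma> bmin bmax Imax t0) \<longleftrightarrow> PP c y = Imax"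
proof -
  let ?M = "MRPI \<gamma> bmin bmax Imax t0"
  have bm: "bmax > 0" using bmin by simp
  have cp: "c > 0" using g bm c by simp
  have csnd: "continuous_on UNIV (\<lambda>y::real\<times>real. snd y)" by (intro continuous_intros)
  have cconst: "continuous_on UNIV (\<lambda>y::real\<times>real. Imax)" by (intro continuous_intros)
  have c0: "continuous_on UNIV (\<lambda>y::real\<times>real. 0::real)" by (intro continuous_intros)
  define U where "U = {y. 0 < snd y \<and> snd y < Imax \<and> PP c y < Imax}"
  define V where "V = {y. 0 < snd y \<and> snd y < Imax \<and> Imax < PP c y}"
  have oU: "open U" unfolding U_def
    by (intro open_Collect_conj open_Collect_less csnd cconst c0 PP_cont[OF cp])
  have oV: "open V" unfolding V_def
    by (intro open_Collect_conj open_Collect_less csnd cconst c0 PP_cont[OF cp])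
  have UM: "U \<subseteq> ?M" unfolding U_def using in_M[OF g bmin c] by force
  have VM: "V \<inter> ?M = {}" unfolding V_def using not_M[OF g bmin c] by blast
  have UI: "U \<subseteq> interior ?M" by (rule interior_maximal[OF UM oU])
  have VC: "V \<inter> closure ?M = {}" using open_Int_closure_eq_empty[OF oV] VM by blast
  show ?thesis
  proof
    assume yf: "y \<in> frontier ?M"
    show "PP c y = Imax"
    proof (rule ccontr)
      assume "PP c y \<noteq> Imax"
      hence "PP c y < Imax \<or> PP c y > Imax" by linarith
      thus False
      proof
        assume "PP c y < Imax"
        hence "y \<in> U" using y by (simp add: U_def)
        thus False using UI yf by (auto simp: frontier_def)
      next
        assume "PP c y > Imax"
        hence "y \<in> V" using y by (simp add: V_def)
        thus False using VC yf by (auto simp: frontier_def)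
      qed
    qed
  next
    assume P: "PP c y = Imax"
    have yM: "y \<in> ?M" by (rule in_M[OF g bmin c]) (use y P in auto)
    have "y \<notin> interior ?M"
    proof
      assume "y \<in> interior ?M"
      then obtain e where e: "e > 0" "ball y e \<subseteq> ?M" by (auto simp: mem_interior)
      define d where "d = min (e/2) ((Imax - snd y)/2)"
      have "d \<le> (Imax - snd y)/2" unfolding d_def by (rule min.cobounded2)
      hence d3: "snd y + d < Imax" using y by (simp add: field_simps)
      have d: "d > 0" "d < e" using e y by (auto simp: d_def)
      define y' where "y' = (fst y, snd y + d)"
      have "dist y y' = d" using d by (cases y) (simp add: y'_def dist_Pair_Pair dist_real_def)
      hence "y' \<in> ball y e" using d by simp
      hence "y' \<in> ?M" using e by auto
      moreover have "PP c y' = PP c y + d" by (simp add: y'_def PP_def)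
      hence "y' \<in> V" using d d3 y P by (simp add: V_def y'_def)
      ultimately show False using VM by blast
    qed
    thus "y \<in> frontier ?M" using yM closure_subset by (auto simp: frontier_def)
  qed
qed

theorem proposition5:
  fixes \<gamma> bmin bmax Imax t0 :: real
  assumes "\<gamma> > 0" and "0 < bmin" and "bmin \<le> bmax"
    and "0 < Imax" and "Imax \<le> 1"
    and "\<gamma> / bmax + Imax \<le> 1"
  shows "\<exists>tb x l b.
     barrier_curve \<gamma> bmin bmax Imax tb x l b (\<gamma> / bmax, Imax) \<and>
     (\<forall>t\<le>tb. snd (l t) - fst (l t) > 0 \<longrightarrow> b t = bmax) \<and>
     (\<forall>t\<le>tb. snd (l t) - fst (l t) < 0 \<longrightarrow> b t = bmin) \<and>
     (\<gamma> / bmax, Imax) \<in> G_zero Imax \<inter> Pi_set \<and>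
     x ` {..<tb} = barrier \<gamma> bmin bmax Imax t0 \<inter> {y. snd y > 0} \<and>
     (\<exists>\<epsilon>>0. \<forall>t\<in>{tb - \<epsilon><..<tb}. x t \<in> G_minus Imax)"
proof -
  note g = assms(1) and bmin = assms(2,3) and Ip = assms(4) and I1 = assms(5) and cI = assms(6)
  have bm: "bmax > 0" using bmin by simp
  define c where "c = \<gamma>/bmax"
  have cp: "c > 0" using g bm by (simp add: c_def)
  have gam: "\<gamma> = c * bmax" using bm by (simp add: c_def)
  define hz where "hz = Imax + c - c * ln c"
  have phc: "phi c hz c = Imax" by (simp add: phi_def hz_def)
  obtain R where R: "c < R" "phi c hz R = 0" using phi_root[OF cp, of hz] phc Ip by auto
  interpret inv1 c R "gg bmax c hz" "GG bmax c hz" by (rule inv1_SIR[OF cp bm R])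
  define \<sigma> where "\<sigma> = sigi c R (GG bmax c hz)"
  define x where "x = (\<lambda>t. (\<sigma> t, phi c hz (\<sigma> t)))"
  define l where "l = (\<lambda>t. (1 - c / \<sigma> t, 1::real))"
  define b where "b = (\<lambda>t::real. bmax)"
  have sprops: "c \<le> \<sigma> t \<and> \<sigma> t < R \<and> GG bmax c hz (\<sigma> t) = t" if tle: "t \<le> 0" for t
  proof -
    obtain S1 where S1: "c \<le> S1" "S1 < R" "GG bmax c hz S1 \<le> t" using GG_diverge[OF cp bm R tle] by blast
    have "c \<le> \<sigma> t" "\<sigma> t \<le> S1" "GG bmax c hz (\<sigma> t) = t"
      using sigma_props[OF S1(1,2) S1(3) tle] by (auto simp: \<sigma>_def)
    thus ?thesis using S1 by auto
  qed
  have s0: "\<sigma> 0 = c" using sigma_G[of c] G_c R by (simp add: \<sigma>_def)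
  have sgt: "c < \<sigma> t" if "t < 0" for t
  proof -
    have "\<sigma> t \<noteq> c" using sprops[of t] that G_c by auto
    thus ?thesis using sprops[of t] that by auto
  qed
  have Ipos: "0 < phi c hz (\<sigma> t)" if "t \<le> 0" for t
    using phi_pos[OF cp _ _ R(2)] sprops[OF that] by auto
  have xint: "\<forall>s t. s \<le> t \<and> t \<le> 0 \<longrightarrow> ((\<lambda>\<tau>. sir_f \<gamma> (x \<tau>) (b \<tau>)) has_integral (x t - x s)) {s..t}"
  proof (intro allI impI)
    fix s t :: real assume st: "s \<le> t \<and> t \<le> 0"
    obtain S1 where S1: "c \<le> S1" "S1 < R" "GG bmax c hz S1 \<le> s" using GG_diverge[OF cp bm R, of s] st by auto
    show "((\<lambda>\<tau>. sir_f \<gamma> (x \<tau>) (b \<tau>)) has_integral (x t - x s)) {s..t}"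
      using traj(1)[where Sm=S1 and a=s and b=t and k=0 and \<sigma>=\<sigma> and h=hz, OF cp bm gam R S1(1,2)] S1 st
      by (simp add: x_def b_def \<sigma>_def)
  qed
  have lint: "\<forall>s t. s \<le> t \<and> t \<le> 0 \<longrightarrow> ((\<lambda>\<tau>. sir_adj \<gamma> (x \<tau>) (l \<tau>) (b \<tau>)) has_integral (l t - l s)) {s..t}"
  proof (intro allI impI)
    fix s t :: real assume st: "s \<le> t \<and> t \<le> 0"
    obtain S1 where S1: "c \<le> S1" "S1 < R" "GG bmax c hz S1 \<le> s" using GG_diverge[OF cp bm R, of s] st by auto
    show "((\<lambda>\<tau>. sir_adj \<gamma> (x \<tau>) (l \<tau>) (b \<tau>)) has_integral (l t - l s)) {s..t}"
      using traj(2)[where Sm=S1 and a=s and b=t and k=0 and \<sigma>=\<sigma> and h=hz, OF cp bm gam R S1(1,2)] S1 st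
      by (simp add: x_def l_def b_def \<sigma>_def)
  qed
  have x0: "x 0 = (\<gamma> / bmax, Imax)" using s0 phc by (simp add: x_def c_def)
  have l0: "l 0 = (0, 1)" using s0 cp by (simp add: l_def)
  have inner: "l t \<bullet> sir_f \<gamma> (x t) \<beta> = (c * \<beta> - \<gamma>) * phi c hz (\<sigma> t)" if "t \<le> 0" for t \<beta>
  proof -
    have "\<sigma> t > 0" using sprops[OF that] cp by auto
    thus ?thesis by (simp add: l_def x_def sir_f_def field_simps)
  qed
  have AEp: "AE t in lebesgue. t \<le> 0 \<longrightarrow>
        (\<forall>\<beta>\<in>{bmin..bmax}. l t \<bullet> sir_f \<gamma> (x t) \<beta> \<le> 0) \<and>
        l t \<bullet> sir_f \<gamma> (x t) (b t) = 0"
  proof (rule AE_I2, intro impI conjI ballI)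
    fix t \<beta> :: real assume t: "t \<le> 0" and \<beta>: "\<beta> \<in> {bmin..bmax}"
    have "c * \<beta> \<le> c * bmax" using \<beta> cp by (simp add: mult_left_mono)
    hence "c * \<beta> - \<gamma> \<le> 0" using gam by simp
    thus "l t \<bullet> sir_f \<gamma> (x t) \<beta> \<le> 0" using inner[OF t] Ipos[OF t]
      by (simp add: mult_nonpos_nonneg)
  next
    fix t :: real assume t: "t \<le> 0"
    show "l t \<bullet> sir_f \<gamma> (x t) (b t) = 0" using inner[OF t] gam by (simp add: b_def)
  qed
  have Lf1: "\<forall>\<beta>\<in>{bmin..bmax}. Lfg \<gamma> (\<gamma> / bmax, Imax) \<beta> \<le> 0"
  proof
    fix \<beta> assume \<beta>: "\<beta> \<in> {bmin..bmax}"
    have "c * \<beta> \<le> c * bmax" using \<beta> cp by (simp add: mult_left_mono)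
    hence "c * \<beta> - \<gamma> \<le> 0" using gam by simp
    hence "(c * \<beta> - \<gamma>) * Imax \<le> 0" using Ip by (simp add: mult_nonpos_nonneg)
    thus "Lfg \<gamma> (\<gamma> / bmax, Imax) \<beta> \<le> 0" by (simp add: Lfg_def sir_f_def c_def algebra_simps)
  qed
  have Lf2: "Lfg \<gamma> (\<gamma> / bmax, Imax) (b 0) = 0" using bm by (simp add: Lfg_def sir_f_def b_def)
  have zG: "(\<gamma> / bmax, Imax) \<in> G_zero Imax" by (simp add: G_zero_def sir_g_def)
  have bc: "barrier_curve \<gamma> bmin bmax Imax 0 x l b (\<gamma> / bmax, Imax)"
    unfolding barrier_curve_def
    using xint lint x0 l0 zG AEp Lf1 Lf2 bmin by (simp add: b_def)
  have bb2: "\<forall>t\<le>0. snd (l t) - fst (l t) < 0 \<longrightarrow> b t = bmin"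
  proof (intro allI impI)
    fix t :: real assume t: "t \<le> 0" and neg: "snd (l t) - fst (l t) < 0"
    have "\<sigma> t > 0" using sprops[OF t] cp by auto
    hence "snd (l t) - fst (l t) = c / \<sigma> t" by (simp add: l_def)
    moreover have "c / \<sigma> t > 0" using \<open>\<sigma> t > 0\<close> cp by simp
    ultimately show "b t = bmin" using neg by simp
  qed
  have zPi: "(\<gamma> / bmax, Imax) \<in> G_zero Imax \<inter> Pi_set"
    using zG cI Ip I1 cp by (simp add: Pi_set_def c_def)
  have eps: "\<forall>t\<in>{0 - 1<..<0}. x t \<in> G_minus Imax"
  proof
    fix t :: real assume t: "t \<in> {0 - 1<..<0}"
    have "phi c hz (\<sigma> t) < phi c hz c" by (rule phi_strict[OF cp order_refl sgt]) (use t in auto)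
    thus "x t \<in> G_minus Imax" using phc by (simp add: x_def G_minus_def sir_g_def)
  qed
  have PPcurve: "PP c (S, phi c hz S) = Imax" if "S > c" for S
    using PP_gt_c[of c "(S, phi c hz S)"] that by (simp add: phi_def hz_def)
  have seteq: "x ` {..<0} = barrier \<gamma> bmin bmax Imax t0 \<inter> {y. snd y > 0}"
  proof
    show "x ` {..<0} \<subseteq> barrier \<gamma> bmin bmax Imax t0 \<inter> {y. snd y > 0}"
    proof
      fix y assume "y \<in> x ` {..<0}"
      then obtain t where t: "t < 0" "y = x t" by auto
      have S: "c < \<sigma> t" by (rule sgt[OF t(1)])
      have I0: "0 < snd y" using Ipos[of t] t by (simp add: x_def)
      have "phi c hz (\<sigma> t) < phi c hz c" by (rule phi_strict[OF cp order_refl S])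
      hence I1': "snd y < Imax" using phc t by (simp add: x_def)
      have "PP c y = Imax" using PPcurve[OF S] t by (simp add: x_def)
      hence "y \<in> frontier (MRPI \<gamma> bmin bmax Imax t0)"
        using frontier_char[OF g bmin c_def I0 I1'] by simp
      thus "y \<in> barrier \<gamma> bmin bmax Imax t0 \<inter> {y. snd y > 0}"
        using I0 I1' by (simp add: barrier_def G_minus_def sir_g_def)
    qed
    show "barrier \<gamma> bmin bmax Imax t0 \<inter> {y. snd y > 0} \<subseteq> x ` {..<0}"
    proof
      fix y assume y: "y \<in> barrier \<gamma> bmin bmax Imax t0 \<inter> {y. snd y > 0}"
      have I0: "0 < snd y" and I1': "snd y < Imax" and yf: "y \<in> frontier (MRPI \<gamma> bmin bmax Imax t0)"
        using y by (auto simp: barrier_def G_minus_def sir_g_def)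
      have P: "PP c y = Imax" using frontier_char[OF g bmin c_def I0 I1'] yf by simp
      define S where "S = fst y"
      have Sc: "S > c"
      proof (rule ccontr)
        assume "\<not> S > c"
        hence "PP c y = snd y" using PP_le_c[of y c] by (simp add: S_def)
        thus False using P I1' by simp
      qed
      have Iy: "snd y = phi c hz S" using PP_gt_c[of c y] Sc P by (simp add: S_def phi_def hz_def)
      have SR: "S < R"
      proof (rule ccontr)
        assume "\<not> S < R"
        hence "phi c hz S \<le> phi c hz R" using phi_mono[OF cp, of R S hz] R by simp
        thus False using Iy I0 R by simp
      qed
      define t where "t = GG bmax c hz S"
      have tneg: "t < 0" using G_strict[of c S] Sc SR G_c by (simp add: t_def)
      have "\<sigma> t = S" using sigma_G[of S] Sc SR by (simp add: \<sigma>_def t_def)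
      hence "x t = y" using Iy by (simp add: x_def S_def prod_eq_iff)
      thus "y \<in> x ` {..<0}" using tneg by auto
    qed
  qed
  show ?thesis
    apply (rule exI[of _ 0], rule exI[of _ x], rule exI[of _ l], rule exI[of _ b])
    using bc bb2 zPi seteq eps by (auto simp: b_def intro!: exI[of _ 1])
qed

end
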